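(* Fix $\kappa\ge1$. There exist constants $\kappa_1=\kappa_1(\kappa)>0$, $\kappa_2=\kappa_2(\kappa)>0$ and an integer $n_0=n_0(\kappa)$, depending only on $\kappa$, such that the following holds. Let $X_1,X_2,\dots$ be i.i.d. real random variables whose common distribution belongs to $\mathcal{S}(\kappa)$, with $\mathbb{E}X_1=0$ and $\mathbb{E}X_1^2=\sigma^2>0$. Then for all $n\ge n_0$ and all $0\le\gamma\le\kappa_1\sigma$, \[ \mathbb{P}\Big\{\sum_{i=1}^nX_i\ge\gamma n\Big\}\ \ge\ \frac14\exp\Big\{-\frac{n\gamma^2}{\kappa_2\sigma^2}\Big\}. \]
   Context: A real random variable $X$ is sub-Gaussian with tail parameter $s^2$ if $\mathbb{E}\,e^{\lambda(X-\mathbb{E}X)}\le e^{\lambda^2s^2/2}$ for all $\lambda\in\mathbb{R}$. For $\kappa>0$, $\mathcal{S}(\kappa)$ is the class of distributions with variance $\sigma^2>0$ that are sub-Gaussian with some tail parameter $s^2$ satisfying $1\le s^2/\sigma^2<\kappa$. *)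

theory Defs
  imports "HOL-Probability.Probability"
begin

definition real_distr :: "real measure \<Rightarrow> bool" where
  "real_distr \<mu> \<longleftrightarrow> prob_space \<mu> \<and> sets \<mu> = sets borel"

text \<open>Mean of a distribution (only meaningful when integrable).\<close>
definition dmean :: "real measure \<Rightarrow> real" where
  "dmean \<mu> = (\<integral>x. x \<partial>\<mu>)"

definition dvar :: "real measure \<Rightarrow> real" where
  "dvar \<mu> = (\<integral>x. (x - dmean \<mu>)\<^sup>2 \<partial>\<mu>)"

text \<open>The expectation of the nonnegative variable exp(...) is taken as a (possibly infinite)
  nonnegative integral, so the inequality includes finiteness.\<close>
definition sub_gaussian :: "real measure \<Rightarrow> real \<Rightarrow> bool" where
  "sub_gaussian \<mu> s2 \<longleftrightarrow> real_distr \<mu> \<and> integrable \<mu> (\<lambda>x. x) \<and>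
     (\<forall>l::real. (\<integral>\<^sup>+x. ennreal (exp (l * (x - dmean \<mu>))) \<partial>\<mu>)
                 \<le> ennreal (exp (l\<^sup>2 * s2 / 2)))"

definition Sclass :: "real \<Rightarrow> real measure set" where
  "Sclass \<kappa> = {\<mu>. real_distr \<mu> \<and> integrable \<mu> (\<lambda>x. x\<^sup>2) \<and> dvar \<mu> > 0 \<and>
     (\<exists>s2. sub_gaussian \<mu> s2 \<and> 1 \<le> s2 / dvar \<mu> \<and> s2 / dvar \<mu> < \<kappa>)}"

end

theory Submission
  imports Defs
begin

lemma std_normal_sym:
  assumes [measurable]: "A \<in> sets borel"
  shows "emeasure std_normal_distribution (uminus -` A) = emeasure std_normal_distribution A"
proof -
  have m: "(\<lambda>x. ennreal (std_normal_density x) * indicator A x) \<in> borel_measurable borel" by measurable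
  have "emeasure std_normal_distribution A = (\<integral>\<^sup>+x. ennreal (std_normal_density x) * indicator A x \<partial>lborel)"
    by (simp add: emeasure_density)
  also have "\<dots> = (\<integral>\<^sup>+x. ennreal (std_normal_density (0 + (-1) * x)) * indicator A (0 + (-1) * x) \<partial>lborel)"
    using nn_integral_real_affine[OF m, of "-1" 0] by simp
  also have "\<dots> = (\<integral>\<^sup>+x. ennreal (std_normal_density x) * indicator (uminus -` A) x \<partial>lborel)"
    by (simp add: std_normal_density_def indicator_def)
  also have "\<dots> = emeasure std_normal_distribution (uminus -` A)"
  proof -
    have "uminus -` A \<in> sets borel"
      using measurable_sets[of "uminus :: real \<Rightarrow> real" borel borel A] by simp
    then show ?thesis by (simp add: emeasure_density)
  qed
  finally show ?thesis ..
qed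

lemma std_normal_Icc:
  assumes "a \<le> b"
  shows "measure std_normal_distribution {a..b} \<le> (b - a) / sqrt (2*pi)"
proof -
  have "emeasure std_normal_distribution {a..b} = (\<integral>\<^sup>+x. ennreal (std_normal_density x) * indicator {a..b} x \<partial>lborel)"
    by (simp add: emeasure_density)
  also have "\<dots> \<le> (\<integral>\<^sup>+x. ennreal (1 / sqrt (2*pi)) * indicator {a..b::real} x \<partial>lborel)"
  proof (intro nn_integral_mono mult_right_mono)
    fix x :: real
    have "exp (- x\<^sup>2 / 2) \<le> 1" by simp
    then show "ennreal (std_normal_density x) \<le> ennreal (1 / sqrt (2*pi))"
      by (intro ennreal_leI) (simp add: std_normal_density_def divide_right_mono)
  qed simp
  also have "\<dots> = ennreal (1 / sqrt (2*pi)) * ennreal (b - a)"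
    using assms by (simp add: nn_integral_cmult)
  also have "\<dots> = ennreal ((b - a) / sqrt (2*pi))"
    using assms by (simp add: ennreal_mult'[symmetric])
  finally show ?thesis
    using assms by (simp add: measure_def enn2real_leI)
qed

lemma std_normal_cdf_half:
  "cdf std_normal_distribution (1/2) < 3/4" "isCont (cdf std_normal_distribution) (1/2)"
proof -
  interpret N: real_distribution std_normal_distribution by (rule real_dist_normal_dist)
  let ?m = "measure std_normal_distribution"
  have e1: "uminus -` {1/2<..} = {..<-1/2::real}" by auto
  have "?m {..<-1/2} = ?m {1/2<..}"
    using std_normal_sym[of "{1/2<..}"] e1 by (simp add: measure_def)
  moreover have "?m {..1/2} = ?m {..<-1/2} + ?m {-1/2..1/2}"
  proof -
    have "{..1/2::real} = {..<-1/2} \<union> {-1/2..1/2}" by auto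
    moreover have "?m ({..<-1/2} \<union> {-1/2..1/2}) = ?m {..<-1/2} + ?m {-1/2..1/2::real}"
      by (rule N.finite_measure_Union) auto
    ultimately show ?thesis by simp
  qed
  moreover have "?m {1/2<..} = 1 - ?m {..1/2}"
  proof -
    have "{1/2<..} = UNIV - {..1/2::real}" by auto
    then show ?thesis using N.prob_compl[of "{..1/2}"] by (simp add: N.borel_UNIV)
  qed
  moreover have "?m {-1/2..1/2} \<le> 1 / sqrt (2*pi)"
    using std_normal_Icc[of "-1/2" "1/2"] by simp
  moreover have "1 / sqrt (2*pi) < 1/2"
  proof -
    have "2 < sqrt (2*pi)"
      using pi_gt3 by (simp add: real_less_rsqrt)
    then show ?thesis by (simp add: divide_less_eq)
  qed
  ultimately have "?m {-1/2..1/2} < 1/2" "?m {..<-1/2} = ?m {1/2<..}"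
   "?m {..1/2} = ?m {..<-1/2} + ?m {-1/2..1/2}" "?m {1/2<..} = 1 - ?m {..1/2}" by linarith+
  then show "cdf std_normal_distribution (1/2) < 3/4"
    unfolding cdf_def by linarith
  have "?m {1/2} \<le> 0" using std_normal_Icc[of "1/2" "1/2"] by simp
  then have "?m {1/2} = 0" by (simp add: measure_nonneg antisym)
  then show "isCont (cdf std_normal_distribution) (1/2)"
    by (simp add: N.isCont_cdf)
qed


lemma exp_ge_pow4: "0 \<le> y \<Longrightarrow> y^4 / 64 \<le> exp (y::real)"
proof -
  assume y: "0 \<le> y"
  have "1 + y/2 + (y/2)^2/2 \<le> exp (y/2)" using exp_lower_Taylor_quadratic[of "y/2"] y by simp
  moreover have "y^2/8 \<le> 1 + y/2 + (y/2)^2/2" using y by (simp add: power2_eq_square)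
  ultimately have "y^2/8 \<le> exp (y/2)" by linarith
  then have "(y^2/8)^2 \<le> (exp (y/2))^2" by (rule power_mono) simp
  also have "(exp (y/2))^2 = exp y" by (simp add: power2_eq_square exp_add[symmetric])
  finally show ?thesis by (simp add: power2_eq_square power4_eq_xxxx)
qed

lemma pow4_le_exp: "(y::real)^4 \<le> 64 * (exp y + exp (-y))"
proof (cases "0 \<le> y")
  case True
  have "y^4 \<le> 64*exp y" using exp_ge_pow4[OF True] by simp
  then show ?thesis using exp_gt_zero[of "-y"] unfolding distrib_left by linarith
next
  case False
  have "y^4 \<le> 64*exp (-y)" using exp_ge_pow4[of "-y"] False by simp
  then show ?thesis using exp_gt_zero[of y] unfolding distrib_left by linarith
qed

lemma Sclass_moments:
  assumes mu: "\<mu> \<in> Sclass \<kappa>" and m0: "dmean \<mu> = 0" and s: "0 < \<sigma>"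
    and v: "(\<integral>x. x\<^sup>2 \<partial>\<mu>) = \<sigma>\<^sup>2"
  shows "integrable \<mu> (\<lambda>x. x^4)" "(\<integral>x. x^4 \<partial>\<mu>) \<le> 256 * \<kappa>^2 * \<sigma>^4"
proof -
  from mu obtain s2 where rd: "real_distr \<mu>" and i2: "integrable \<mu> (\<lambda>x. x\<^sup>2)" and sg: "sub_gaussian \<mu> s2"
    and r1: "1 \<le> s2 / dvar \<mu>" and r2: "s2 / dvar \<mu> < \<kappa>"
    unfolding Sclass_def by auto
  have dv: "dvar \<mu> = \<sigma>\<^sup>2" using v m0 by (simp add: dvar_def)
  have s2ge: "\<sigma>\<^sup>2 \<le> s2" using r1 dv s by (simp add: le_divide_eq)
  have s2le: "s2 < \<kappa> * \<sigma>\<^sup>2" using r2 dv s by (simp add: divide_less_eq)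
  have s2pos: "0 < s2" using s2ge s by (meson less_le_trans zero_less_power)
  interpret real_distribution \<mu> using rd unfolding real_distr_def by (simp add: real_distribution_def real_distribution_axioms_def)
  define l where "l = 1 / sqrt s2"
  have l2: "l^2 * s2 = 1" using s2pos by (simp add: l_def power_divide)
  have mgf: "(\<integral>\<^sup>+x. ennreal (exp (c * x)) \<partial>\<mu>) \<le> ennreal (exp (1/2))" if "c = l \<or> c = -l" for c
  proof -
    have "c^2 * s2 = 1" using that l2 by auto
    moreover have "(\<integral>\<^sup>+x. ennreal (exp (c * (x - dmean \<mu>))) \<partial>\<mu>) \<le> ennreal (exp (c\<^sup>2 * s2 / 2))"
      using sg unfolding sub_gaussian_def by blast
    ultimately show ?thesis using m0 by simp
  qed
  have pw: "ennreal (x^4) \<le> ennreal (64 * s2^2) * (ennreal (exp (l * x)) + ennreal (exp ((-l) * x)))" for x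
  proof -
    have "(l*x)^4 \<le> 64 * (exp (l*x) + exp (-(l*x)))" by (rule pow4_le_exp)
    moreover have "(l*x)^4 = x^4 / s2^2"
    proof -
      have "l^2 = 1 / s2" using s2pos by (simp add: l_def power_divide)
      moreover have "l^4 = (l^2)^2" by (simp flip: power_mult)
      ultimately have "l^4 = 1 / s2^2" by (simp add: power_divide)
      then show ?thesis by (simp add: power_mult_distrib)
    qed
    ultimately have "x^4 / s2^2 \<le> 64 * (exp (l*x) + exp (-(l*x)))" by simp
    then have "x^4 \<le> (64 * (exp (l*x) + exp (-(l*x)))) * s2^2"
      using s2pos by (simp add: divide_le_eq)
    also have "\<dots> = 64 * s2^2 * (exp (l*x) + exp ((-l)*x))" by simp
    finally have "ennreal (x^4) \<le> ennreal (64 * s2^2 * (exp (l*x) + exp ((-l)*x)))"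
      by (rule ennreal_leI)
    also have "\<dots> = ennreal (64 * s2^2) * ennreal (exp (l*x) + exp ((-l)*x))"
      by (rule ennreal_mult) auto
    also have "ennreal (exp (l*x) + exp ((-l)*x)) = ennreal (exp (l * x)) + ennreal (exp ((-l) * x))"
      by (rule ennreal_plus) auto
    finally show ?thesis .
  qed
  have "(\<integral>\<^sup>+x. ennreal (x^4) \<partial>\<mu>) \<le> (\<integral>\<^sup>+x. ennreal (64 * s2^2) * (ennreal (exp (l * x)) + ennreal (exp ((-l) * x))) \<partial>\<mu>)"
    by (intro nn_integral_mono pw)
  also have "\<dots> = ennreal (64 * s2^2) * ((\<integral>\<^sup>+x. ennreal (exp (l * x)) \<partial>\<mu>) + (\<integral>\<^sup>+x. ennreal (exp ((-l) * x)) \<partial>\<mu>))"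
    by (simp add: nn_integral_cmult nn_integral_add)
  also have "\<dots> \<le> ennreal (64 * s2^2) * (ennreal (exp (1/2)) + ennreal (exp (1/2)))"
    by (intro mult_left_mono add_mono mgf) auto
  also have "\<dots> = ennreal (64 * s2^2) * ennreal (2 * exp (1/2))"
    by (subst ennreal_plus[symmetric]) auto
  also have "\<dots> = ennreal (128 * s2^2 * exp (1/2))"
    by (subst ennreal_mult[symmetric]) auto
  finally have B: "(\<integral>\<^sup>+x. ennreal (x^4) \<partial>\<mu>) \<le> ennreal (128 * s2^2 * exp (1/2))" .
  show int4: "integrable \<mu> (\<lambda>x. x^4)"
  proof (rule integrableI_bounded)
    have "(\<integral>\<^sup>+x. ennreal (norm (x^4)) \<partial>\<mu>) = (\<integral>\<^sup>+x. ennreal (x^4) \<partial>\<mu>)"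
      by (simp add: abs_of_nonneg)
    moreover have "ennreal (128 * s2^2 * exp (1/2)) < \<infinity>" by simp
    ultimately show "(\<integral>\<^sup>+x. ennreal (norm (x^4)) \<partial>\<mu>) < \<infinity>" using B
      by (simp add: le_less_trans)
  qed simp
  have "(\<integral>x. x^4 \<partial>\<mu>) = enn2real (\<integral>\<^sup>+x. ennreal (x^4) \<partial>\<mu>)"
    by (rule integral_eq_nn_integral) auto
  also have "\<dots> \<le> 128 * s2^2 * exp (1/2)"
    using B by (intro enn2real_leI) auto
  also have "\<dots> \<le> 128 * s2^2 * 2"
  proof -
    have "exp (1/2::real) \<le> 2"
      by (rule exp_half_le2)
    then show ?thesis by (intro mult_left_mono) auto
  qed
  also have "\<dots> \<le> 256 * (\<kappa> * \<sigma>\<^sup>2)^2"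
  proof -
    have "s2^2 \<le> (\<kappa> * \<sigma>\<^sup>2)^2" using s2le s2pos by (intro power_mono) auto
    then show ?thesis by simp
  qed
  finally show "(\<integral>x. x^4 \<partial>\<mu>) \<le> 256 * \<kappa>^2 * \<sigma>^4"
    by (simp add: power_mult_distrib power_mult[symmetric])
qed


lemma char_sum_PiM:
  assumes rd: "real_distribution \<mu>" and fin: "finite I"
  shows "char (distr (PiM I (\<lambda>_. \<mu>)) borel (\<lambda>\<omega>. (\<Sum>i\<in>I. \<omega> i) / c)) t = (char \<mu> (t / c)) ^ card I"
proof -
  interpret real_distribution \<mu> by fact
  interpret product_sigma_finite "\<lambda>_. \<mu>"
    by (simp add: product_sigma_finite_def sigma_finite_measure_axioms)
  have [measurable]: "(\<lambda>\<omega>. (\<Sum>i\<in>I. \<omega> i) / c) \<in> borel_measurable (PiM I (\<lambda>_. \<mu>))"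
    by measurable
  have "char (distr (PiM I (\<lambda>_. \<mu>)) borel (\<lambda>\<omega>. (\<Sum>i\<in>I. \<omega> i) / c)) t
      = (CLINT \<omega>|PiM I (\<lambda>_. \<mu>). iexp (t * ((\<Sum>i\<in>I. \<omega> i) / c)))"
    by (simp add: char_def integral_distr)
  also have "\<dots> = (CLINT \<omega>|PiM I (\<lambda>_. \<mu>). (\<Prod>i\<in>I. iexp ((t / c) * \<omega> i)))"
  proof (rule Bochner_Integration.integral_cong[OF refl])
    fix \<omega>
    have "\<i> * complex_of_real (t * ((\<Sum>i\<in>I. \<omega> i) / c)) = (\<Sum>i\<in>I. \<i> * complex_of_real ((t / c) * \<omega> i))"
      by (simp add: sum_distrib_left sum_divide_distrib)
    then show "iexp (t * ((\<Sum>i\<in>I. \<omega> i) / c)) = (\<Prod>i\<in>I. iexp ((t / c) * \<omega> i))"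
      by (simp add: exp_sum[OF fin, symmetric])
  qed
  also have "\<dots> = (\<Prod>i\<in>I. CLINT x|\<mu>. iexp ((t / c) * x))"
    by (rule product_integral_prod[OF fin]) (rule integrable_iexp, auto)
  also have "\<dots> = (char \<mu> (t / c)) ^ card I"
    by (simp add: char_def)
  finally show ?thesis .
qed

lemma Sclass_third:
  assumes mu: "\<mu> \<in> Sclass \<kappa>" and m0: "dmean \<mu> = 0" and s: "0 < \<sigma>"
    and v: "(\<integral>x. x\<^sup>2 \<partial>\<mu>) = \<sigma>\<^sup>2" and a: "0 \<le> a"
  shows "(\<integral>x. min (6 * x\<^sup>2) (a * \<bar>x\<bar>^3) \<partial>\<mu>) \<le> a * ((256 * \<kappa>^2 + 1) / 2) * \<sigma>^3"
proof -
  have rd: "real_distr \<mu>" and i2: "integrable \<mu> (\<lambda>x. x\<^sup>2)" using mu unfolding Sclass_def by auto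
  interpret real_distribution \<mu> using rd unfolding real_distr_def by (simp add: real_distribution_def real_distribution_axioms_def)
  note i4 = Sclass_moments(1)[OF assms(1-4)] and b4 = Sclass_moments(2)[OF assms(1-4)]
  have pw: "min (6 * x\<^sup>2) (a * \<bar>x\<bar>^3) \<le> a / 2 * (x^4 / \<sigma> + \<sigma> * x\<^sup>2)" for x
  proof -
    have "0 \<le> x\<^sup>2 * (\<bar>x\<bar> - \<sigma>)\<^sup>2 / \<sigma>" using s by simp
    also have "x\<^sup>2 * (\<bar>x\<bar> - \<sigma>)\<^sup>2 / \<sigma> = x^4 / \<sigma> + \<sigma> * x\<^sup>2 - 2 * \<bar>x\<bar>^3"
      using s by (simp add: field_simps power2_eq_square power3_eq_cube power4_eq_xxxx)
    finally have "\<bar>x\<bar>^3 \<le> (x^4 / \<sigma> + \<sigma> * x\<^sup>2) / 2" by simp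
    then have "a * \<bar>x\<bar>^3 \<le> a * ((x^4 / \<sigma> + \<sigma> * x\<^sup>2) / 2)" using a by (rule mult_left_mono)
    then show ?thesis by simp
  qed
  have im: "integrable \<mu> (\<lambda>x. min (6 * x\<^sup>2) (a * \<bar>x\<bar>^3))"
    by (rule Bochner_Integration.integrable_bound[where f="\<lambda>x. 6 * x\<^sup>2"]) (auto simp: i2 a)
  have "(\<integral>x. min (6 * x\<^sup>2) (a * \<bar>x\<bar>^3) \<partial>\<mu>) \<le> (\<integral>x. a / 2 * (x^4 / \<sigma> + \<sigma> * x\<^sup>2) \<partial>\<mu>)"
    by (intro integral_mono im pw) (auto simp: i2 i4)
  also have "\<dots> = a / 2 * ((\<integral>x. x^4 \<partial>\<mu>) / \<sigma> + \<sigma> * \<sigma>\<^sup>2)"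
    using i2 i4 v by (simp add: Bochner_Integration.integral_add)
  also have "\<dots> \<le> a / 2 * (256 * \<kappa>^2 * \<sigma>^4 / \<sigma> + \<sigma> * \<sigma>\<^sup>2)"
    using b4 s a by (intro mult_left_mono add_mono divide_right_mono) auto
  also have "\<dots> = a * ((256 * \<kappa>^2 + 1) / 2) * \<sigma>^3"
    using s by (simp add: field_simps power2_eq_square power3_eq_cube power4_eq_xxxx)
  finally show ?thesis .
qed


lemma char_bound:
  fixes n :: nat
  assumes mu: "\<mu> \<in> Sclass \<kappa>" and m0: "dmean \<mu> = 0" and s: "0 < \<sigma>"
    and v: "(\<integral>x. x\<^sup>2 \<partial>\<mu>) = \<sigma>\<^sup>2" and n: "0 < n" and tn: "t^2 / 4 \<le> n"
  shows "cmod (char (distr (PiM {1..n} (\<lambda>_. \<mu>)) borel (\<lambda>\<omega>. (\<Sum>i\<in>{1..n}. \<omega> i) / (\<sigma> * sqrt n))) t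
           - complex_of_real ((1 + (-(t^2)/2) / n)^n))
         \<le> \<bar>t\<bar>^3 * ((256 * \<kappa>^2 + 1) / 2) / (6 * sqrt n)"
proof -
  have rd: "real_distr \<mu>" and i2: "integrable \<mu> (\<lambda>x. x\<^sup>2)" using mu unfolding Sclass_def by auto
  interpret real_distribution \<mu> using rd unfolding real_distr_def by (simp add: real_distribution_def real_distribution_axioms_def)
  define C where "C = (256 * \<kappa>^2 + 1) / 2"
  define t' where "t' = t / (\<sigma> * sqrt n)"
  define \<psi> where "\<psi> = char \<mu> t'"
  define b where "b = 1 + (-(t^2)/2) / n"
  have i1: "integrable \<mu> (\<lambda>x. x)"
    using rd unfolding Sclass_def real_distr_def
    by (rule_tac square_integrable_imp_integrable[OF _ i2]) simp
  have e1: "expectation (\<lambda>x. x) = 0" using m0 by (simp add: dmean_def)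
  have sn: "0 < sqrt (real n)" using n by simp
  have ch: "char (distr (PiM {1..n} (\<lambda>_. \<mu>)) borel (\<lambda>\<omega>. (\<Sum>i\<in>{1..n}. \<omega> i) / (\<sigma> * sqrt n))) t = \<psi>^n"
    using char_sum_PiM[OF real_distribution_axioms, of "{1..n}" "\<sigma> * sqrt n" t] by (simp add: \<psi>_def t'_def)
  have "cmod (\<psi> - (1 - t'^2 * \<sigma>\<^sup>2 / 2)) \<le> (t'^2 / 6) * expectation (\<lambda>x. min (6 * x^2) (\<bar>t'\<bar> * \<bar>x\<bar>^3))"
    unfolding \<psi>_def by (rule char_approx3[OF i1 e1 i2]) (simp add: e1 v)
  also have "\<dots> \<le> (t'^2 / 6) * (\<bar>t'\<bar> * C * \<sigma>^3)"
    unfolding C_def by (intro mult_left_mono Sclass_third[OF mu m0 s v]) auto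
  also have "\<dots> = \<bar>t\<bar>^3 * C / (6 * n * sqrt n)"
    using s sn by (simp add: t'_def field_simps power2_eq_square power3_eq_cube abs_mult abs_divide)
  finally have A: "cmod (\<psi> - (1 - t'^2 * \<sigma>\<^sup>2 / 2)) \<le> \<bar>t\<bar>^3 * C / (6 * n * sqrt n)" .
  have "t'^2 * \<sigma>\<^sup>2 / 2 = t^2 / 2 / n"
    using s sn by (simp add: t'_def power_divide power_mult_distrib)
  then have bb: "1 - t'^2 * \<sigma>\<^sup>2 / 2 = b" by (simp add: b_def)
  have b1: "\<bar>b\<bar> \<le> 1"
    using tn n by (simp add: b_def abs_le_iff divide_le_eq field_simps)
  have "cmod (\<psi>^n - (complex_of_real b)^n) \<le> n * cmod (\<psi> - complex_of_real b)"
    by (rule norm_power_diff) (use b1 cmod_char_le_1 in \<open>auto simp: \<psi>_def\<close>)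
  also have "\<dots> \<le> n * (\<bar>t\<bar>^3 * C / (6 * n * sqrt n))"
    using A bb by (intro mult_left_mono) auto
  also have "\<dots> = \<bar>t\<bar>^3 * C / (6 * sqrt n)"
    using n by (simp add: field_simps)
  finally show ?thesis
    unfolding ch b_def C_def of_real_power .
qed


lemma PiM_sum_meas: "real_distribution \<mu> \<Longrightarrow> (\<lambda>\<omega>. \<Sum>i\<in>I. \<omega> i) \<in> borel_measurable (PiM I (\<lambda>_. \<mu>))"
proof -
  assume "real_distribution \<mu>"
  then interpret real_distribution \<mu> .
  show ?thesis by measurable
qed

lemma uclt:
  "\<exists>N::nat. \<forall>n::nat\<ge>N. \<forall>\<mu>\<in>Sclass \<kappa>. \<forall>\<sigma>::real. dmean \<mu> = 0 \<longrightarrow> \<sigma> > 0 \<longrightarrow> (\<integral>x. x\<^sup>2 \<partial>\<mu>) = \<sigma>\<^sup>2 \<longrightarrow>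
     1/4 \<le> measure (PiM {1..n} (\<lambda>_. \<mu>)) {\<omega> \<in> space (PiM {1..n} (\<lambda>_. \<mu>)). \<sigma> * sqrt n / 2 \<le> (\<Sum>i=1..n. \<omega> i)}"
proof (rule ccontr)
  assume neg: "\<not> ?thesis"
  define Q where "Q N x \<longleftrightarrow> fst x \<ge> Suc N \<and> fst (snd x) \<in> Sclass \<kappa> \<and> dmean (fst (snd x)) = 0 \<and> snd (snd x) > 0 \<and>
     (\<integral>y. y\<^sup>2 \<partial>fst (snd x)) = (snd (snd x))\<^sup>2 \<and>
     measure (PiM {1..fst x} (\<lambda>_. fst (snd x))) {\<omega> \<in> space (PiM {1..fst x} (\<lambda>_. fst (snd x))).
        snd (snd x) * sqrt (fst x) / 2 \<le> (\<Sum>i=1..fst x. \<omega> i)} < 1/4" for N and x :: "nat \<times> real measure \<times> real"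
  have "\<exists>x. Q N x" for N
  proof -
    let ?R = "\<lambda>N::nat. \<forall>n::nat\<ge>N. \<forall>\<mu>\<in>Sclass \<kappa>. \<forall>\<sigma>::real. dmean \<mu> = 0 \<longrightarrow> \<sigma> > 0 \<longrightarrow> (\<integral>x. x\<^sup>2 \<partial>\<mu>) = \<sigma>\<^sup>2 \<longrightarrow>
     1/4 \<le> measure (PiM {1..n} (\<lambda>_. \<mu>)) {\<omega> \<in> space (PiM {1..n} (\<lambda>_. \<mu>)). \<sigma> * sqrt n / 2 \<le> (\<Sum>i=1..n. \<omega> i)}"
    have "\<not> ?R (Suc N)"
    proof
      assume "?R (Suc N)"
      then have "\<exists>N. ?R N" by (rule exI[of _ "Suc N"])
      then show False using neg by (rule notE[rotated])
    qed
    then obtain n :: nat and \<mu> \<sigma> where n: "n \<ge> Suc N" and "\<mu>\<in>Sclass \<kappa>" "dmean \<mu> = 0" "\<sigma> > 0" "(\<integral>x. x\<^sup>2 \<partial>\<mu>) = \<sigma>\<^sup>2"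
      "\<not> 1/4 \<le> measure (PiM {1..n} (\<lambda>_. \<mu>)) {\<omega> \<in> space (PiM {1..n} (\<lambda>_. \<mu>)). \<sigma> * sqrt n / 2 \<le> (\<Sum>i=1..n. \<omega> i)}"
      by blast
    with n \<open>\<mu>\<in>Sclass \<kappa>\<close> have "Q N (n, \<mu>, \<sigma>)" unfolding Q_def fst_conv snd_conv not_le[symmetric] by (intro conjI)
    then show ?thesis ..
  qed
  then have "\<forall>N. \<exists>x. Q N x" ..
  then obtain f where f: "\<And>N. Q N (f N)" using choice by blast
  define nn where "nn N = fst (f N)" for N
  define mu where "mu N = fst (snd (f N))" for N
  define sg where "sg N = snd (snd (f N))" for N
  have H: "nn N \<ge> Suc N \<and> mu N \<in> Sclass \<kappa> \<and> dmean (mu N) = 0 \<and> sg N > 0 \<and> (\<integral>x. x\<^sup>2 \<partial>mu N) = (sg N)\<^sup>2 \<and>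
     measure (PiM {1..nn N} (\<lambda>_. mu N)) {\<omega> \<in> space (PiM {1..nn N} (\<lambda>_. mu N)). sg N * sqrt (nn N) / 2 \<le> (\<Sum>i=1..nn N. \<omega> i)} < 1/4" for N
    using f[of N] unfolding Q_def nn_def mu_def sg_def .
  define P where "P k = PiM {1..nn k} (\<lambda>_. mu k)" for k
  define X where "X k = (\<lambda>\<omega>. (\<Sum>i\<in>{1..nn k}. \<omega> i) / (sg k * sqrt (nn k)))" for k
  define Mk where "Mk k = distr (P k) borel (X k)" for k
  have rdk: "real_distribution (mu k)" for k
    using H[of k] unfolding Sclass_def real_distr_def
    by (simp add: real_distribution_def real_distribution_axioms_def)
  have psk: "prob_space (P k)" for k
    unfolding P_def by (rule prob_space_PiM) (use rdk in \<open>simp add: real_distribution_def\<close>)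
  have Xm: "X k \<in> borel_measurable (P k)" for k
  proof -
    interpret real_distribution "mu k" by (rule rdk)
    show ?thesis unfolding X_def P_def by measurable
  qed
  have rdM: "real_distribution (Mk k)" for k
    unfolding Mk_def using prob_space.real_distribution_distr[OF psk Xm] .
  have nn_top: "filterlim nn at_top sequentially"
  proof (rule filterlim_at_top_mono[OF filterlim_ident])
    have "x \<le> nn x" for x using H[of x] by linarith
    then show "\<forall>\<^sub>F x in sequentially. x \<le> nn x" by simp
  qed
  have conv: "weak_conv_m Mk std_normal_distribution"
  proof (rule levy_continuity[OF rdM real_dist_normal_dist])
    fix t :: real
    let ?C = "(256 * \<kappa>^2 + 1) / 2"
    have ev: "\<forall>\<^sub>F k in sequentially. cmod (char (Mk k) t - complex_of_real ((1 + (-(t^2)/2) / nn k)^nn k))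
                \<le> \<bar>t\<bar>^3 * ?C / (6 * sqrt (nn k))"
    proof -
      have "filterlim (\<lambda>k. real (nn k)) at_top sequentially"
        by (rule filterlim_compose[OF filterlim_real_sequentially nn_top])
      then have "\<forall>\<^sub>F k in sequentially. t^2/4 \<le> real (nn k)"
        unfolding filterlim_at_top by blast
      then show ?thesis
      proof (rule eventually_mono)
        fix k assume "t^2/4 \<le> real (nn k)"
        moreover have "0 < nn k" using H[of k] by linarith
        ultimately show "cmod (char (Mk k) t - complex_of_real ((1 + (-(t^2)/2) / nn k)^nn k))
                \<le> \<bar>t\<bar>^3 * ?C / (6 * sqrt (nn k))"
          unfolding Mk_def P_def X_def using char_bound[of "mu k" \<kappa> "sg k" "nn k" t] H[of k] by simp
      qed
    qed
    have z: "(\<lambda>k. \<bar>t\<bar>^3 * ?C / (6 * sqrt (nn k))) \<longlonglongrightarrow> 0"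
    proof -
      have "filterlim (\<lambda>k. 6 * sqrt (real (nn k))) at_top sequentially"
        by (intro filterlim_tendsto_pos_mult_at_top[OF tendsto_const] sqrt_at_top[THEN filterlim_compose]
             filterlim_compose[OF filterlim_real_sequentially nn_top]) simp
      then show ?thesis
        by (intro tendsto_divide_0[OF tendsto_const] filterlim_at_top_imp_at_infinity)
    qed
    have e: "(\<lambda>k. complex_of_real ((1 + (-(t^2)/2) / nn k)^nn k)) \<longlonglongrightarrow> complex_of_real (exp (-(t^2)/2))"
      by (rule isCont_tendsto_compose[OF _ filterlim_compose[OF tendsto_exp_limit_sequentially nn_top]]) auto
    have "(\<lambda>k. char (Mk k) t) \<longlonglongrightarrow> complex_of_real (exp (-(t^2)/2))"
      by (rule Lim_transform[OF e]) (rule Lim_null_comparison[OF ev z])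
    then show "(\<lambda>k. char (Mk k) t) \<longlonglongrightarrow> char std_normal_distribution t"
      by (simp add: char_std_normal_distribution)
  qed
  then have lim: "(\<lambda>k. cdf (Mk k) (1/2)) \<longlonglongrightarrow> cdf std_normal_distribution (1/2)"
    using std_normal_cdf_half(2) unfolding weak_conv_m_def weak_conv_def by blast
  have ge: "3/4 \<le> cdf (Mk k) (1/2)" for k
  proof -
    interpret prob_space "P k" by (rule psk)
    let ?A = "{\<omega> \<in> space (P k). X k \<omega> \<le> 1/2}"
    let ?B = "{\<omega> \<in> space (P k). sg k * sqrt (nn k) / 2 \<le> (\<Sum>i=1..nn k. \<omega> i)}"
    have pos: "0 < sg k * sqrt (nn k)" using H[of k] by (simp add: less_le_trans[OF zero_less_Suc])
    have sets: "?A \<in> events" "?B \<in> events"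
    proof -
      note [measurable] = PiM_sum_meas[OF rdk[of k], of "{1..nn k}"] Xm[of k]
      show "?A \<in> events" by measurable
      show "?B \<in> events" unfolding P_def by measurable
    qed
    have "space (P k) \<subseteq> ?A \<union> ?B"
    proof
      fix \<omega> assume w: "\<omega> \<in> space (P k)"
      show "\<omega> \<in> ?A \<union> ?B"
      proof (cases "X k \<omega> \<le> 1/2")
        case False
        then have "1/2 < (\<Sum>i\<in>{1..nn k}. \<omega> i) / (sg k * sqrt (nn k))" by (simp add: X_def)
        then have "sg k * sqrt (nn k) / 2 \<le> (\<Sum>i=1..nn k. \<omega> i)"
          using pos by (simp add: less_divide_eq)
        then show ?thesis using w by auto
      qed (use w in auto)
    qed
    then have "1 \<le> prob (?A \<union> ?B)"
      using sets finite_measure_mono[of "space (P k)" "?A \<union> ?B"] prob_space by auto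
    also have "\<dots> \<le> prob ?A + prob ?B"
      using sets by (rule measure_Un_le)
    finally have "1 \<le> prob ?A + prob ?B" .
    moreover have "prob ?B < 1/4" using H[of k] unfolding P_def by simp
    moreover have "cdf (Mk k) (1/2) = prob ?A"
      unfolding cdf_def Mk_def using Xm
      by (subst measure_distr) (auto simp: vimage_def Int_def conj_commute)
    ultimately show ?thesis by linarith
  qed
  have "3/4 \<le> cdf std_normal_distribution (1/2)"
    by (rule LIMSEQ_le_const[OF lim]) (use ge in auto)
  then show False using std_normal_cdf_half(1) by linarith
qed


definition gP :: "real measure \<Rightarrow> nat set \<Rightarrow> real \<Rightarrow> real" where
  "gP \<mu> I c = measure (PiM I (\<lambda>_. \<mu>)) {\<omega> \<in> space (PiM I (\<lambda>_. \<mu>)). c \<le> (\<Sum>i\<in>I. \<omega> i)}"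

lemma gP_sets:
  assumes "real_distribution \<mu>"
  shows "{\<omega> \<in> space (PiM I (\<lambda>_. \<mu>)). c \<le> (\<Sum>i\<in>I. \<omega> i)} \<in> sets (PiM I (\<lambda>_. \<mu>))"
proof -
  note [measurable] = PiM_sum_meas[OF assms, of I]
  show ?thesis by measurable
qed

lemma gP_split:
  assumes rd: "real_distribution \<mu>" and IJ: "I \<inter> J = {}" and fin: "finite I" "finite J"
  shows "gP \<mu> I c1 * gP \<mu> J c2 \<le> gP \<mu> (I \<union> J) (c1 + c2)"
proof -
  interpret real_distribution \<mu> by fact
  interpret PS: product_sigma_finite "\<lambda>_. \<mu>"
    by (simp add: product_sigma_finite_def sigma_finite_measure_axioms)
  interpret PJ: finite_product_sigma_finite "\<lambda>_. \<mu>" J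
    by standard (rule fin)
  let ?P = "PiM I (\<lambda>_. \<mu>) \<Otimes>\<^sub>M PiM J (\<lambda>_. \<mu>)"
  let ?A = "{\<omega> \<in> space (PiM I (\<lambda>_. \<mu>)). c1 \<le> (\<Sum>i\<in>I. \<omega> i)}"
  let ?B = "{\<omega> \<in> space (PiM J (\<lambda>_. \<mu>)). c2 \<le> (\<Sum>i\<in>J. \<omega> i)}"
  let ?E = "{\<omega> \<in> space (PiM (I \<union> J) (\<lambda>_. \<mu>)). c1 + c2 \<le> (\<Sum>i\<in>I \<union> J. \<omega> i)}"
  have psP: "prob_space ?P"
    by (intro prob_space_pair prob_space_PiM) (auto simp: prob_space_axioms)
  have sA: "?A \<in> sets (PiM I (\<lambda>_. \<mu>))" and sB: "?B \<in> sets (PiM J (\<lambda>_. \<mu>))"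
    and sE: "?E \<in> sets (PiM (I \<union> J) (\<lambda>_. \<mu>))" using gP_sets[OF rd] by auto
  have mm: "merge I J \<in> measurable ?P (PiM (I \<union> J) (\<lambda>_. \<mu>))"
    by (rule measurable_merge)
  have "gP \<mu> (I \<union> J) (c1 + c2) = measure (distr ?P (PiM (I \<union> J) (\<lambda>_. \<mu>)) (merge I J)) ?E"
    unfolding gP_def using PS.distr_merge[OF IJ fin] by simp
  also have "\<dots> = measure ?P (merge I J -` ?E \<inter> space ?P)"
    by (rule measure_distr[OF mm sE])
  also have "\<dots> \<ge> measure ?P (?A \<times> ?B)"
  proof (rule finite_measure.finite_measure_mono)
    show "finite_measure ?P" using psP by (simp add: prob_space_def)
    show "merge I J -` ?E \<inter> space ?P \<in> sets ?P"
      using mm sE by (rule measurable_sets)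
    show "?A \<times> ?B \<subseteq> merge I J -` ?E \<inter> space ?P"
    proof safe
      fix x y assume x: "x \<in> space (PiM I (\<lambda>_. \<mu>))" "c1 \<le> (\<Sum>i\<in>I. x i)"
        and y: "y \<in> space (PiM J (\<lambda>_. \<mu>))" "c2 \<le> (\<Sum>i\<in>J. y i)"
      have xy: "(x, y) \<in> space ?P" using x y by (simp add: space_pair_measure)
      have "merge I J (x, y) \<in> space (PiM (I \<union> J) (\<lambda>_. \<mu>))"
        using measurable_space[OF mm xy] .
      moreover have "(\<Sum>i\<in>I \<union> J. merge I J (x, y) i) = (\<Sum>i\<in>I. x i) + (\<Sum>i\<in>J. y i)"
        using IJ fin by (simp add: sum.union_disjoint)
      ultimately show "(x, y) \<in> merge I J -` ?E" using x y by simp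
      show "(x, y) \<in> space ?P" by (rule xy)
    qed
  qed
  also have "measure ?P (?A \<times> ?B) = gP \<mu> I c1 * gP \<mu> J c2"
    unfolding gP_def measure_def
    by (simp add: PJ.emeasure_pair_measure_Times[OF sA sB] enn2real_mult)
  finally show ?thesis .
qed

lemma gP_shift:
  assumes rd: "real_distribution \<mu>"
  shows "gP \<mu> {a+1..a+b} c = gP \<mu> {1..b} c"
proof -
  interpret real_distribution \<mu> by fact
  let ?K = "{a+1..a+b}"
  let ?t = "\<lambda>\<omega>. \<lambda>n\<in>{1..b}. \<omega> (n + a)"
  have D: "distr (PiM ?K (\<lambda>_. \<mu>)) (PiM {1..b} (\<lambda>_. \<mu>)) ?t = PiM {1..b} (\<lambda>_. \<mu>)"
    using distr_PiM_reindex[of ?K "\<lambda>_. \<mu>" "\<lambda>n. n + a" "{1..b}"] by (auto simp: prob_space_axioms inj_on_def)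
  have tm: "?t \<in> measurable (PiM ?K (\<lambda>_. \<mu>)) (PiM {1..b} (\<lambda>_. \<mu>))"
    by (rule measurable_restrict) auto
  have "gP \<mu> {1..b} c = measure (distr (PiM ?K (\<lambda>_. \<mu>)) (PiM {1..b} (\<lambda>_. \<mu>)) ?t)
      {\<omega> \<in> space (PiM {1..b} (\<lambda>_. \<mu>)). c \<le> (\<Sum>i\<in>{1..b}. \<omega> i)}"
    unfolding gP_def D ..
  also have "\<dots> = measure (PiM ?K (\<lambda>_. \<mu>)) (?t -` {\<omega> \<in> space (PiM {1..b} (\<lambda>_. \<mu>)). c \<le> (\<Sum>i\<in>{1..b}. \<omega> i)} \<inter> space (PiM ?K (\<lambda>_. \<mu>)))"
    by (rule measure_distr[OF tm gP_sets[OF rd]])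
  also have "?t -` {\<omega> \<in> space (PiM {1..b} (\<lambda>_. \<mu>)). c \<le> (\<Sum>i\<in>{1..b}. \<omega> i)} \<inter> space (PiM ?K (\<lambda>_. \<mu>))
      = {\<omega> \<in> space (PiM ?K (\<lambda>_. \<mu>)). c \<le> (\<Sum>i\<in>?K. \<omega> i)}"
  proof -
    have "(\<Sum>i\<in>{1..b}. \<omega> (i + a)) = (\<Sum>i\<in>?K. \<omega> i)" for \<omega> :: "nat \<Rightarrow> real"
      using sum.shift_bounds_cl_nat_ivl[of \<omega> 1 a b] by (simp add: add.commute)
    then show ?thesis
      using measurable_space[OF tm] by auto
  qed
  finally show ?thesis unfolding gP_def by simp
qed


lemma gP_add:
  assumes rd: "real_distribution \<mu>"
  shows "gP \<mu> {1..a} c1 * gP \<mu> {1..b} c2 \<le> gP \<mu> {1..a+b} (c1 + c2)"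
proof -
  have "{1..a+b} = {1..a} \<union> {a+1..a+b}" by auto
  moreover have "{1..a} \<inter> {a+1..a+b} = {}" by auto
  ultimately show ?thesis
    using gP_split[OF rd, of "{1..a}" "{a+1..a+b}" c1 c2] gP_shift[OF rd, of a b c2] by simp
qed

lemma iter_bound:
  fixes g :: "nat \<Rightarrow> real" and L :: nat
  assumes L: "1 \<le> L" and sup: "\<And>a b. g a * g b \<le> g (a + b)"
    and base: "\<And>k. L \<le> k \<Longrightarrow> k < 2 * L \<Longrightarrow> 1/4 \<le> g k"
  shows "n \<ge> L \<Longrightarrow> (1/4)^(n div L) \<le> g n"
proof (induction n rule: less_induct)
  case (less n)
  show ?case
  proof (cases "n < 2 * L")
    case True
    have "n div L = Suc ((n - L) div L)" using less.prems L by (simp add: le_div_geq)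
    moreover have "(n - L) div L = 0" using True L by simp
    ultimately have "n div L = 1" by simp
    then show ?thesis using base[OF less.prems True] by simp
  next
    case False
    then have nL: "L \<le> n - L" and lt: "n - L < n" using L by auto
    have IH: "(1/4)^((n - L) div L) \<le> g (n - L)" by (rule less.IH[OF lt nL])
    have gL: "1/4 \<le> g L" using base[of L] L by simp
    have "n div L = Suc ((n - L) div L)" using less.prems L by (simp add: le_div_geq)
    then have "(1/4::real)^(n div L) = (1/4)^((n - L) div L) * (1/4)"
      by simp
    also have "\<dots> \<le> g (n - L) * g L"
      by (rule mult_mono[OF IH gL]) (auto intro: order_trans[OF _ IH])
    also have "\<dots> \<le> g n" using sup[of "n - L" L] nL by simp
    finally show ?thesis .
  qed
qed


theorem lemmaA:
  fixes \<kappa> :: real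
  assumes "\<kappa> \<ge> 1"
  shows "\<exists>\<kappa>1>0. \<exists>\<kappa>2>0. \<exists>n0::nat.
    \<forall>\<mu> \<in> Sclass \<kappa>. \<forall>\<sigma>::real.
      dmean \<mu> = 0 \<longrightarrow> \<sigma> > 0 \<longrightarrow> (\<integral>x. x\<^sup>2 \<partial>\<mu>) = \<sigma>\<^sup>2 \<longrightarrow>
      (\<forall>n\<ge>n0. \<forall>\<gamma>::real. 0 \<le> \<gamma> \<longrightarrow> \<gamma> \<le> \<kappa>1 * \<sigma> \<longrightarrow>
        measure (PiM {1..n} (\<lambda>_. \<mu>))
          {\<omega> \<in> space (PiM {1..n} (\<lambda>_. \<mu>)). (\<Sum>i=1..n. \<omega> i) \<ge> \<gamma> * real n}
        \<ge> 1/4 * exp (- (real n * \<gamma>\<^sup>2) / (\<kappa>2 * \<sigma>\<^sup>2)))"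
proof -
  obtain N :: nat where hN: "\<forall>n::nat\<ge>N. \<forall>\<mu>\<in>Sclass \<kappa>. \<forall>\<sigma>::real. dmean \<mu> = 0 \<longrightarrow> \<sigma> > 0 \<longrightarrow> (\<integral>x. x\<^sup>2 \<partial>\<mu>) = \<sigma>\<^sup>2 \<longrightarrow>
     1/4 \<le> measure (PiM {1..n} (\<lambda>_. \<mu>)) {\<omega> \<in> space (PiM {1..n} (\<lambda>_. \<mu>)). \<sigma> * sqrt n / 2 \<le> (\<Sum>i=1..n. \<omega> i)}"
    using uclt[of \<kappa>] by (elim exE) (rule that)
  define N' where "N' = max N 1"
  define k1 where "k1 = 1 / sqrt (8 * (real N' + 1))"
  have k1pos: "k1 > 0" unfolding k1_def by simp
  have k1sq: "k1^2 = 1 / (8 * (real N' + 1))" unfolding k1_def by (simp add: power_divide)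
  have main: "\<forall>\<mu> \<in> Sclass \<kappa>. \<forall>\<sigma>::real.
      dmean \<mu> = 0 \<longrightarrow> \<sigma> > 0 \<longrightarrow> (\<integral>x. x\<^sup>2 \<partial>\<mu>) = \<sigma>\<^sup>2 \<longrightarrow>
      (\<forall>n\<ge>N'. \<forall>\<gamma>::real. 0 \<le> \<gamma> \<longrightarrow> \<gamma> \<le> k1 * \<sigma> \<longrightarrow>
        measure (PiM {1..n} (\<lambda>_. \<mu>))
          {\<omega> \<in> space (PiM {1..n} (\<lambda>_. \<mu>)). (\<Sum>i=1..n. \<omega> i) \<ge> \<gamma> * real n}
        \<ge> 1/4 * exp (- (real n * \<gamma>\<^sup>2) / ((1/32) * \<sigma>\<^sup>2)))"
  proof (intro ballI allI impI)
    fix \<mu> \<sigma> n \<gamma>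
    assume mu: "\<mu> \<in> Sclass \<kappa>" and m0: "dmean \<mu> = 0" and s: "0 < \<sigma>" and v: "(\<integral>x. x\<^sup>2 \<partial>\<mu>) = \<sigma>\<^sup>2"
      and n: "N' \<le> n" and g0: "0 \<le> \<gamma>" and gk: "\<gamma> \<le> k1 * \<sigma>"
    have rd: "real_distribution \<mu>"
      using mu unfolding Sclass_def real_distr_def by (simp add: real_distribution_def real_distribution_axioms_def)
    define g where "g k = gP \<mu> {1..k} (\<gamma> * real k)" for k
    have goal_eq: "measure (PiM {1..n} (\<lambda>_. \<mu>))
          {\<omega> \<in> space (PiM {1..n} (\<lambda>_. \<mu>)). (\<Sum>i=1..n. \<omega> i) \<ge> \<gamma> * real n} = g n"
      unfolding g_def gP_def ..
    have base: "1/4 \<le> g k" if k: "N \<le> k" and k2: "4 * \<gamma>^2 * k \<le> \<sigma>^2" for k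
    proof -
      interpret PS: prob_space "PiM {1..k} (\<lambda>_. \<mu>)"
        by (rule prob_space_PiM) (use rd in \<open>simp add: real_distribution_def\<close>)
      have "(\<gamma> * sqrt k)^2 \<le> (\<sigma> / 2)^2"
        using k2 by (simp add: power_mult_distrib power_divide)
      then have "\<gamma> * sqrt k \<le> \<sigma> / 2"
        by (rule power2_le_imp_le) (use s in simp)
      then have "\<gamma> * sqrt k * sqrt k \<le> \<sigma> / 2 * sqrt k"
        by (rule mult_right_mono) simp
      then have gs: "\<gamma> * real k \<le> \<sigma> * sqrt k / 2"
        by (simp add: mult.assoc)
      have "1/4 \<le> measure (PiM {1..k} (\<lambda>_. \<mu>)) {\<omega> \<in> space (PiM {1..k} (\<lambda>_. \<mu>)). \<sigma> * sqrt k / 2 \<le> (\<Sum>i=1..k. \<omega> i)}"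
        using hN k mu m0 s v by blast
      also have "\<dots> \<le> g k"
        unfolding g_def gP_def
        by (rule PS.finite_measure_mono[OF _ gP_sets[OF rd]]) (use gs in auto)
      finally show ?thesis .
    qed
    have sup: "g a * g b \<le> g (a + b)" for a b
      using gP_add[OF rd, where a=a and b=b and ?c1.0="\<gamma> * real a" and ?c2.0="\<gamma> * real b"] by (simp add: g_def distrib_left)
    have gnn: "0 \<le> g k" for k unfolding g_def gP_def by simp
    have NN: "N \<le> N'" "1 \<le> N'" unfolding N'_def by auto
    have N'1: "1 \<le> real N'" using NN by simp
    show "1/4 * exp (- (real n * \<gamma>\<^sup>2) / ((1/32) * \<sigma>\<^sup>2)) \<le> measure (PiM {1..n} (\<lambda>_. \<mu>))
          {\<omega> \<in> space (PiM {1..n} (\<lambda>_. \<mu>)). (\<Sum>i=1..n. \<omega> i) \<ge> \<gamma> * real n}"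
    proof (cases "4 * \<gamma>^2 * n \<le> \<sigma>^2")
      case True
      have "1/4 * exp (- (real n * \<gamma>\<^sup>2) / ((1/32) * \<sigma>\<^sup>2)) \<le> 1/4 * 1"
        by (intro mult_left_mono) (auto simp: s)
      also have "\<dots> \<le> g n" using base[OF _ True] n NN by simp
      finally show ?thesis unfolding goal_eq .
    next
      case False
      then have gpos: "0 < \<gamma>" using g0 s by (cases "\<gamma> = 0") auto
      define r where "r = \<sigma>^2 / (8 * \<gamma>^2)"
      define L where "L = nat \<lfloor>r\<rfloor>"
      have "\<gamma>^2 \<le> (k1 * \<sigma>)^2" using gk g0 by (intro power_mono) auto
      then have "\<gamma>^2 \<le> \<sigma>^2 / (8 * (real N' + 1))" using k1sq by (simp add: power_mult_distrib)
      then have rN: "real N' + 1 \<le> r"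
        using gpos unfolding r_def by (simp add: field_simps)
      have Lr: "real L \<le> r" "r < real L + 1" unfolding L_def using rN by linarith+
      have LN: "N' + 1 \<le> L" unfolding L_def using rN by linarith
      have L1: "1 \<le> L" using LN by simp
      have b2: "1/4 \<le> g k" if "L \<le> k" "k < 2 * L" for k
      proof (rule base)
        show "N \<le> k" using that LN NN by linarith
        have "real k < 2 * r" using that Lr by linarith
        then show "4 * \<gamma>^2 * real k \<le> \<sigma>^2"
          using gpos unfolding r_def by (simp add: field_simps)
      qed
      have nL: "L \<le> n"
      proof -
        have "\<sigma>^2 < 4 * \<gamma>^2 * n" using False by simp
        then have "2 * r < real n" using gpos unfolding r_def by (simp add: field_simps)
        then show ?thesis using Lr rN by linarith
      qed
      have it: "(1/4)^(n div L) \<le> g n"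
        by (rule iter_bound[OF L1 sup b2 nL])
      define m where "m = n div L"
      have "real m \<le> real n / real L" unfolding m_def by (rule of_nat_div_le_of_nat)
      also have "\<dots> \<le> real n / (r / 2)"
      proof (intro divide_left_mono)
        show "r / 2 \<le> real L" using Lr rN N'1 by linarith
        show "0 < real L * (r / 2)" using L1 rN N'1 by simp
      qed simp
      also have "\<dots> = 16 * real n * \<gamma>^2 / \<sigma>^2"
        using gpos s unfolding r_def by (simp add: field_simps)
      finally have mb: "2 * real m \<le> 32 * real n * \<gamma>^2 / \<sigma>^2" by simp
      have "1/4 * exp (- (real n * \<gamma>\<^sup>2) / ((1/32) * \<sigma>\<^sup>2)) \<le> exp (- (32 * real n * \<gamma>^2 / \<sigma>^2))"
        using s by (simp add: field_simps)
      also have "\<dots> \<le> exp (- (2 * real m))" using mb by simp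
      also have "\<dots> = (exp (-2))^m" by (simp add: exp_of_nat_mult[symmetric])
      also have "\<dots> \<le> (1/4)^m"
      proof (rule power_mono)
        have "1 + 2 + 2^2/2 \<le> exp (2::real)" using exp_lower_Taylor_quadratic[of 2] by simp
        then have "4 \<le> exp (2::real)" by simp
        then show "exp (-2) \<le> (1/4::real)" by (simp add: exp_minus field_simps)
      qed simp
      also have "\<dots> \<le> g n" using it unfolding m_def .
      finally show ?thesis unfolding goal_eq .
    qed
  qed
  show ?thesis
    apply (rule exI[of _ k1])
    apply (rule conjI[OF k1pos])
    apply (rule exI[of _ "1/32"])
    apply (rule conjI)
     apply simp
    apply (rule exI[of _ N'])
    apply (rule main)
    done
qed


end
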